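(* Let $\alpha\in\mathbb{N}^n$. Then $1-T_\alpha(x)$ and $1+T_\alpha(x)$ both belong to $\mathcal Q(1-x_1^2,\dots,1-x_n^2)_{2|\alpha|}$, where $|\alpha|=\sum_i\alpha_i$.
   Context: $\Sigma[x]_r$ is the cone of sums of squares of polynomials in $x=(x_1,\dots,x_n)$ of total degree at most $r$; $\mathcal Q(1-x_1^2,\dots,1-x_n^2)_r=\Sigma[x]_r+\sum_{i=1}^n(1-x_i^2)\Sigma[x]_{r-2}$. $T_k(x)=\cos(k\arccos x)$ is the Chebyshev polynomial of the first kind and $T_\alpha(x)=\prod_{i=1}^nT_{\alpha_i}(x_i)$. *)

theory Defs
  imports Complex_Main
begin

text \<open>Points of R^n are functions x :: nat \<Rightarrow> real; only coordinates i < n matter.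
  Exponent vectors alpha in N^n are functions nat \<Rightarrow> nat, only entries i < n matter.\<close>

definition monomial_val :: "nat \<Rightarrow> (nat \<Rightarrow> nat) \<Rightarrow> (nat \<Rightarrow> real) \<Rightarrow> real" where
  "monomial_val n a x = (\<Prod>i<n. x i ^ a i)"

definition tdeg :: "nat \<Rightarrow> (nat \<Rightarrow> nat) \<Rightarrow> nat" where
  "tdeg n a = (\<Sum>i<n. a i)"

definition is_poly :: "nat \<Rightarrow> nat \<Rightarrow> ((nat \<Rightarrow> real) \<Rightarrow> real) \<Rightarrow> bool" where
  "is_poly n d p \<longleftrightarrow> (\<exists>A c. finite A \<and> (\<forall>a\<in>A. tdeg n a \<le> d) \<and>
      (\<forall>x. p x = (\<Sum>a\<in>A. c a * monomial_val n a x)))"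

text \<open>Sigma[x]_r: sums of squares of polynomials, the SOS polynomial having degree at most r,
  i.e. squares of polynomials of degree at most r div 2.\<close>
definition in_SOS :: "nat \<Rightarrow> nat \<Rightarrow> ((nat \<Rightarrow> real) \<Rightarrow> real) \<Rightarrow> bool" where
  "in_SOS n r s \<longleftrightarrow> (\<exists>(m::nat) q. (\<forall>j<m. is_poly n (r div 2) (q j)) \<and>
      (\<forall>x. s x = (\<Sum>j<m. (q j x)\<^sup>2)))"

definition in_Qbox :: "nat \<Rightarrow> nat \<Rightarrow> ((nat \<Rightarrow> real) \<Rightarrow> real) \<Rightarrow> bool" where
  "in_Qbox n r p \<longleftrightarrow> (\<exists>\<sigma>0 \<sigma>. in_SOS n r \<sigma>0 \<and> (\<forall>i<n. in_SOS n (r - 2) (\<sigma> i)) \<and>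
      (\<forall>x. p x = \<sigma>0 x + (\<Sum>i<n. (1 - (x i)\<^sup>2) * \<sigma> i x)))"

text \<open>Chebyshev polynomials of the first kind (polynomial T_k with T_k(cos t) = cos(k t)).\<close>
fun cheb :: "nat \<Rightarrow> real \<Rightarrow> real" where
  "cheb 0 x = 1"
| "cheb (Suc 0) x = x"
| "cheb (Suc (Suc k)) x = 2 * x * cheb (Suc k) x - cheb k x"

definition cheb_multi :: "nat \<Rightarrow> (nat \<Rightarrow> nat) \<Rightarrow> (nat \<Rightarrow> real) \<Rightarrow> real" where
  "cheb_multi n a x = (\<Prod>i<n. cheb (a i) (x i))"

end

theory Submission
  imports Defs
begin

lemma mono_add: "monomial_val n (\<lambda>i. a i + b i) x = monomial_val n a x * monomial_val n b x"
  by (simp add: monomial_val_def power_add prod.distrib)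

lemma tdeg_add: "tdeg n (\<lambda>i. a i + b i) = tdeg n a + tdeg n b"
  by (simp add: tdeg_def sum.distrib)

lemma poly_gen:
  fixes S :: "'b set"
  assumes "finite S" "\<forall>s\<in>S. tdeg n (g s) \<le> d"
    "\<forall>x. p x = (\<Sum>s\<in>S. f s * monomial_val n (g s) x)"
  shows "is_poly n d p"
  unfolding is_poly_def
proof (intro exI conjI)
  show "finite (g ` S)" using assms(1) by simp
  show "\<forall>a\<in>g ` S. tdeg n a \<le> d" using assms(2) by auto
  show "\<forall>x. p x = (\<Sum>a\<in>g ` S. (\<Sum>s\<in>{s\<in>S. g s = a}. f s) * monomial_val n a x)"
  proof
    fix x
    have "p x = (\<Sum>s\<in>S. f s * monomial_val n (g s) x)" using assms(3) by simp
    also have "\<dots> = (\<Sum>a\<in>g ` S. \<Sum>s\<in>{s\<in>S. g s = a}. f s * monomial_val n (g s) x)"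
      by (rule sum.image_gen[OF assms(1)])
    also have "\<dots> = (\<Sum>a\<in>g ` S. (\<Sum>s\<in>{s\<in>S. g s = a}. f s) * monomial_val n a x)"
      by (rule sum.cong, simp, simp add: sum_distrib_right)
    finally show "p x = (\<Sum>a\<in>g ` S. (\<Sum>s\<in>{s\<in>S. g s = a}. f s) * monomial_val n a x)" .
  qed
qed

lemma poly_mono: assumes "is_poly n d p" "d \<le> d'" shows "is_poly n d' p"
proof -
  from assms(1) obtain A c where A: "finite A" "\<forall>a\<in>A. tdeg n a \<le> d"
    "\<forall>x. p x = (\<Sum>a\<in>A. c a * monomial_val n a x)" unfolding is_poly_def by blast
  show ?thesis unfolding is_poly_def
    by (intro exI[of _ A] exI[of _ c] conjI) (use A assms(2) in auto)
qed

lemma poly_const: "is_poly n d (\<lambda>x. c)"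
  unfolding is_poly_def
  by (rule exI[of _ "{\<lambda>_. 0}"], rule exI[of _ "\<lambda>_. c"])
     (simp add: tdeg_def monomial_val_def)

lemma poly_var: assumes "i < n" shows "is_poly n 1 (\<lambda>x. x i)"
  unfolding is_poly_def
proof (rule exI[of _ "{\<lambda>j. if j = i then 1 else 0}"], rule exI[of _ "\<lambda>_. 1"], intro conjI)
  show "\<forall>a\<in>{\<lambda>j. if j = i then 1 else 0}. tdeg n a \<le> 1"
    using assms by (simp add: tdeg_def)
  have "\<And>x. monomial_val n (\<lambda>j. if j = i then 1 else 0) x = (\<Prod>j<n. if j = i then x j else 1)"
    unfolding monomial_val_def by (rule prod.cong) auto
  then show "\<forall>x. x i = (\<Sum>a\<in>{\<lambda>j. if j = i then 1 else 0}. 1 * monomial_val n a x)"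
    using assms by (simp add: prod.delta)
qed simp

lemma poly_add: assumes "is_poly n d p" "is_poly n d q" shows "is_poly n d (\<lambda>x. p x + q x)"
proof -
  from assms obtain A c B e where A: "finite A" "\<forall>a\<in>A. tdeg n a \<le> d"
    "\<forall>x. p x = (\<Sum>a\<in>A. c a * monomial_val n a x)"
    and B: "finite B" "\<forall>a\<in>B. tdeg n a \<le> d" "\<forall>x. q x = (\<Sum>a\<in>B. e a * monomial_val n a x)"
    unfolding is_poly_def by blast
  show ?thesis
    apply (rule poly_gen[where S="A <+> B" and g="case_sum id id" and f="case_sum c e"])
    using A B by (auto simp: sum.Plus comp_def)
qed

lemma poly_mult: assumes "is_poly n d p" "is_poly n d' q" shows "is_poly n (d + d') (\<lambda>x. p x * q x)"
proof -
  from assms obtain A c B e where A: "finite A" "\<forall>a\<in>A. tdeg n a \<le> d"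
    "\<forall>x. p x = (\<Sum>a\<in>A. c a * monomial_val n a x)"
    and B: "finite B" "\<forall>a\<in>B. tdeg n a \<le> d'" "\<forall>x. q x = (\<Sum>a\<in>B. e a * monomial_val n a x)"
    unfolding is_poly_def by blast
  show ?thesis
  proof (rule poly_gen[where S="A \<times> B" and g="\<lambda>(a,b) i. a i + b i" and f="\<lambda>(a,b). c a * e b"])
    show "finite (A \<times> B)" using A B by simp
    show "\<forall>s\<in>A \<times> B. tdeg n ((\<lambda>(a, b) i. a i + b i) s) \<le> d + d'"
      using A B by (auto simp: tdeg_add add_mono)
    show "\<forall>x. p x * q x = (\<Sum>s\<in>A \<times> B. (case s of (a, b) \<Rightarrow> c a * e b) * monomial_val n ((\<lambda>(a, b) i. a i + b i) s) x)"
    proof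
      fix x
      have "p x * q x = (\<Sum>a\<in>A. \<Sum>b\<in>B. (c a * monomial_val n a x) * (e b * monomial_val n b x))"
        using A B by (simp add: sum_product)
      also have "\<dots> = (\<Sum>(a,b)\<in>A \<times> B. (c a * monomial_val n a x) * (e b * monomial_val n b x))"
        by (rule sum.cartesian_product)
      also have "\<dots> = (\<Sum>s\<in>A \<times> B. (case s of (a, b) \<Rightarrow> c a * e b) * monomial_val n ((\<lambda>(a, b) i. a i + b i) s) x)"
        by (rule sum.cong) (auto simp: mono_add)
      finally show "p x * q x = (\<Sum>s\<in>A \<times> B. (case s of (a, b) \<Rightarrow> c a * e b) * monomial_val n ((\<lambda>(a, b) i. a i + b i) s) x)" .
    qed
  qed
qed

lemma poly_diff: assumes "is_poly n d p" "is_poly n d q" shows "is_poly n d (\<lambda>x. p x - q x)"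
proof -
  have "is_poly n (0 + d) (\<lambda>x. (-1) * q x)" by (rule poly_mult[OF poly_const assms(2)])
  then have "is_poly n d (\<lambda>x. - q x)" by simp
  from poly_add[OF assms(1) this] show ?thesis by simp
qed

lemma SOS_zero: "in_SOS n r (\<lambda>x. 0)"
  unfolding in_SOS_def by (rule exI[of _ 0]) simp

lemma SOS_sq: "is_poly n (r div 2) q \<Longrightarrow> in_SOS n r (\<lambda>x. (q x)\<^sup>2)"
  unfolding in_SOS_def by (rule exI[of _ 1], rule exI[of _ "\<lambda>_. q"]) simp

lemma SOS_mono: assumes "in_SOS n r s" "r \<le> r'" shows "in_SOS n r' s"
proof -
  from assms(1) obtain m :: nat and q where q: "\<forall>j<m. is_poly n (r div 2) (q j)" "\<forall>x. s x = (\<Sum>j<m. (q j x)\<^sup>2)"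
    unfolding in_SOS_def by blast
  have "\<forall>j<m. is_poly n (r' div 2) (q j)" using q(1) poly_mono div_le_mono assms(2) by blast
  then show ?thesis unfolding in_SOS_def using q(2) by (intro exI[of _ m] exI[of _ q] conjI)
qed

lemma SOS_scale: assumes "in_SOS n r s" "c \<ge> 0" shows "in_SOS n r (\<lambda>x. c * s x)"
proof -
  from assms obtain m :: nat and q where q: "\<forall>j<m. is_poly n (r div 2) (q j)" "\<forall>x. s x = (\<Sum>j<m. (q j x)\<^sup>2)"
    unfolding in_SOS_def by blast
  show ?thesis unfolding in_SOS_def
  proof (rule exI[of _ m], rule exI[of _ "\<lambda>j x. sqrt c * q j x"], intro conjI allI impI)
    fix j assume "j < m"
    then have "is_poly n (0 + r div 2) (\<lambda>x. sqrt c * q j x)" using q(1) poly_mult[OF poly_const] by blast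
    then show "is_poly n (r div 2) (\<lambda>x. sqrt c * q j x)" by simp
  next
    fix x show "c * s x = (\<Sum>j<m. (sqrt c * q j x)\<^sup>2)"
      using q(2) assms(2) by (simp add: power_mult_distrib sum_distrib_left)
  qed
qed

lemma SOS_add: assumes "in_SOS n r s" "in_SOS n r t" shows "in_SOS n r (\<lambda>x. s x + t x)"
proof -
  from assms(1) obtain m :: nat and q where q: "\<forall>j<m. is_poly n (r div 2) (q j)" "\<forall>x. s x = (\<Sum>j<m. (q j x)\<^sup>2)"
    unfolding in_SOS_def by blast
  from assms(2) obtain m' :: nat and q' where q': "\<forall>j<m'. is_poly n (r div 2) (q' j)" "\<forall>x. t x = (\<Sum>j<m'. (q' j x)\<^sup>2)"
    unfolding in_SOS_def by blast
  define Q where "Q j = (if j < m then q j else q' (j - m))" for j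
  show ?thesis unfolding in_SOS_def
  proof (rule exI[of _ "m + m'"], rule exI[of _ Q], intro conjI allI impI)
    fix j assume "j < m + m'" then show "is_poly n (r div 2) (Q j)"
      using q q' unfolding Q_def by auto
  next
    fix x
    have "(\<Sum>j<m + m'. (Q j x)\<^sup>2) = (\<Sum>j\<in>{0..<m}. (Q j x)\<^sup>2) + (\<Sum>j\<in>{m..<m+m'}. (Q j x)\<^sup>2)"
      by (simp add: sum.atLeastLessThan_concat lessThan_atLeast0)
    also have "(\<Sum>j\<in>{0..<m}. (Q j x)\<^sup>2) = s x" using q(2) by (simp add: Q_def lessThan_atLeast0)
    also have "(\<Sum>j\<in>{m..<m+m'}. (Q j x)\<^sup>2) = (\<Sum>j\<in>{0..<m'}. (Q (j + m) x)\<^sup>2)"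
      using sum.shift_bounds_nat_ivl[of "\<lambda>j. (Q j x)\<^sup>2" 0 m m'] by (simp add: add.commute)
    also have "\<dots> = t x" using q'(2) by (simp add: Q_def lessThan_atLeast0)
    finally show "s x + t x = (\<Sum>j<m + m'. (Q j x)\<^sup>2)" by simp
  qed
qed

lemma Q_mono: assumes "in_Qbox n r p" "r \<le> r'" shows "in_Qbox n r' p"
proof -
  from assms(1) obtain s0 s where
    a: "in_SOS n r s0" "\<forall>i<n. in_SOS n (r - 2) (s i)" "\<forall>x. p x = s0 x + (\<Sum>i<n. (1 - (x i)\<^sup>2) * s i x)"
    unfolding in_Qbox_def by blast
  have "in_SOS n r' s0" using SOS_mono[OF a(1) assms(2)] .
  moreover have "\<forall>i<n. in_SOS n (r' - 2) (s i)" using a(2) SOS_mono[of n "r - 2" _ "r' - 2"] assms(2) by simp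
  ultimately show ?thesis unfolding in_Qbox_def using a(3)
    by (intro exI[of _ s0] exI[of _ s] conjI)
qed

lemma Q_sos: "in_SOS n r s \<Longrightarrow> in_Qbox n r s"
  unfolding in_Qbox_def by (rule exI[of _ s], rule exI[of _ "\<lambda>_ _. 0"]) (simp add: SOS_zero)

lemma Q_gen: assumes "i < n" "in_SOS n (r - 2) s" shows "in_Qbox n r (\<lambda>x. (1 - (x i)\<^sup>2) * s x)"
  unfolding in_Qbox_def
proof (rule exI[of _ "\<lambda>_. 0"], rule exI[of _ "\<lambda>j. if j = i then s else (\<lambda>_. 0)"], intro conjI allI impI)
  fix x
  have "(\<Sum>ia<n. (1 - (x ia)\<^sup>2) * (if ia = i then s else (\<lambda>_. 0)) x) = (\<Sum>ia<n. if ia = i then (1 - (x ia)\<^sup>2) * s x else 0)"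
    by (rule sum.cong) auto
  then show "(1 - (x i)\<^sup>2) * s x = 0 + (\<Sum>ia<n. (1 - (x ia)\<^sup>2) * (if ia = i then s else (\<lambda>_. 0)) x)"
    using assms(1) by simp
qed (use assms in \<open>auto simp: SOS_zero\<close>)

lemma Q_add: assumes "in_Qbox n r p" "in_Qbox n r q" shows "in_Qbox n r (\<lambda>x. p x + q x)"
proof -
  from assms obtain s0 s t0 t where
    a: "in_SOS n r s0" "\<forall>i<n. in_SOS n (r - 2) (s i)" "\<forall>x. p x = s0 x + (\<Sum>i<n. (1 - (x i)\<^sup>2) * s i x)"
    and b: "in_SOS n r t0" "\<forall>i<n. in_SOS n (r - 2) (t i)" "\<forall>x. q x = t0 x + (\<Sum>i<n. (1 - (x i)\<^sup>2) * t i x)"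
    unfolding in_Qbox_def by blast
  show ?thesis unfolding in_Qbox_def
    apply (rule exI[of _ "\<lambda>x. s0 x + t0 x"], rule exI[of _ "\<lambda>i x. s i x + t i x"])
    using a b by (auto simp: SOS_add sum.distrib distrib_left)
qed

lemma Q_scale: assumes "in_Qbox n r p" "c \<ge> 0" shows "in_Qbox n r (\<lambda>x. c * p x)"
proof -
  from assms(1) obtain s0 s where
    a: "in_SOS n r s0" "\<forall>i<n. in_SOS n (r - 2) (s i)" "\<forall>x. p x = s0 x + (\<Sum>i<n. (1 - (x i)\<^sup>2) * s i x)"
    unfolding in_Qbox_def by blast
  have "in_SOS n r (\<lambda>x. c * s0 x)" using SOS_scale[OF a(1) assms(2)] .
  moreover have "\<forall>i<n. in_SOS n (r - 2) (\<lambda>x. c * s i x)" using a(2) SOS_scale assms(2) by blast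
  moreover have "\<forall>x. c * p x = c * s0 x + (\<Sum>i<n. (1 - (x i)\<^sup>2) * (c * s i x))"
  proof
    fix x
    have "c * p x = c * s0 x + c * (\<Sum>i<n. (1 - (x i)\<^sup>2) * s i x)" using a(3) by (simp add: distrib_left)
    also have "c * (\<Sum>i<n. (1 - (x i)\<^sup>2) * s i x) = (\<Sum>i<n. (1 - (x i)\<^sup>2) * (c * s i x))"
      by (simp add: sum_distrib_left mult.left_commute)
    finally show "c * p x = c * s0 x + (\<Sum>i<n. (1 - (x i)\<^sup>2) * (c * s i x))" .
  qed
  ultimately show ?thesis unfolding in_Qbox_def
    by (intro exI[of _ "\<lambda>x. c * s0 x"] exI[of _ "\<lambda>i x. c * s i x"] conjI)
qed

fun chebU :: "nat \<Rightarrow> real \<Rightarrow> real" where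
  "chebU 0 y = 0"
| "chebU (Suc k) y = y * chebU k y + cheb k y"

lemma cheb_first: "cheb (Suc k) y = y * cheb k y + (y\<^sup>2 - 1) * chebU k y"
proof (induction k)
  case 0 then show ?case by simp
next
  case (Suc k)
  have "(y\<^sup>2 - 1) * chebU (Suc k) y = y * ((y\<^sup>2 - 1) * chebU k y) + (y\<^sup>2 - 1) * cheb k y"
    by (simp add: distrib_left mult.left_commute)
  also have "\<dots> = y * (cheb (Suc k) y - y * cheb k y) + (y\<^sup>2 - 1) * cheb k y"
    using Suc.IH by simp
  finally have e: "(y\<^sup>2 - 1) * chebU (Suc k) y = y * (cheb (Suc k) y - y * cheb k y) + (y\<^sup>2 - 1) * cheb k y" .
  have "cheb (Suc (Suc k)) y = 2 * y * cheb (Suc k) y - cheb k y" by simp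
  also have "\<dots> = y * cheb (Suc k) y + (y * (cheb (Suc k) y - y * cheb k y) + (y\<^sup>2 - 1) * cheb k y)"
    by (simp add: power2_eq_square right_diff_distrib left_diff_distrib)
  finally show ?case using e by simp
qed

lemma pell_step:
  fixes T U y :: real
  assumes "1 - T\<^sup>2 = (1 - y\<^sup>2) * U\<^sup>2"
  shows "1 - (y * T + (y\<^sup>2 - 1) * U)\<^sup>2 = (1 - y\<^sup>2) * (y * U + T)\<^sup>2"
proof -
  have id: "(y * T + (y\<^sup>2 - 1) * U)\<^sup>2 = T\<^sup>2 - (y\<^sup>2 - 1) * U\<^sup>2 + (y\<^sup>2 - 1) * (y * U + T)\<^sup>2"
    by (simp add: power2_eq_square algebra_simps)
  have "T\<^sup>2 = 1 - (1 - y\<^sup>2) * U\<^sup>2" using assms by simp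
  then show ?thesis unfolding id by (simp add: algebra_simps)
qed

lemma pell: "1 - (cheb k y)\<^sup>2 = (1 - y\<^sup>2) * (chebU k y)\<^sup>2"
proof (induction k)
  case 0 then show ?case by simp
next
  case (Suc k)
  show ?case unfolding cheb_first chebU.simps by (rule pell_step[OF Suc.IH])
qed

lemma poly_cheb2: "i < n \<Longrightarrow> is_poly n k (\<lambda>x. cheb k (x i)) \<and> is_poly n (Suc k) (\<lambda>x. cheb (Suc k) (x i))"
proof (induction k)
  case 0 then show ?case using poly_var[of i n] by (simp add: poly_const)
next
  case (Suc k)
  then have h1: "is_poly n (Suc k) (\<lambda>x. cheb (Suc k) (x i))" and h0: "is_poly n k (\<lambda>x. cheb k (x i))" by auto
  have a: "is_poly n (1 + Suc k) (\<lambda>x. x i * cheb (Suc k) (x i))"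
    by (rule poly_mult[OF poly_var[OF Suc.prems] h1])
  have b: "is_poly n (0 + (1 + Suc k)) (\<lambda>x. 2 * (x i * cheb (Suc k) (x i)))"
    by (rule poly_mult[OF poly_const a])
  have c: "is_poly n (Suc (Suc k)) (\<lambda>x. cheb k (x i))" using poly_mono[OF h0] by simp
  have "is_poly n (Suc (Suc k)) (\<lambda>x. 2 * (x i * cheb (Suc k) (x i)) - cheb k (x i))"
    using poly_diff[OF _ c] b by simp
  then have "is_poly n (Suc (Suc k)) (\<lambda>x. cheb (Suc (Suc k)) (x i))" by (simp add: mult.assoc)
  then show ?case using h1 by simp
qed

lemma poly_cheb: "i < n \<Longrightarrow> is_poly n k (\<lambda>x. cheb k (x i))"
  using poly_cheb2 by blast

lemma poly_chebU: "i < n \<Longrightarrow> is_poly n k (\<lambda>x. chebU (Suc k) (x i))"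
proof (induction k)
  case 0 then show ?case by (simp add: poly_const)
next
  case (Suc k)
  have a: "is_poly n (1 + k) (\<lambda>x. x i * chebU (Suc k) (x i))"
    using poly_mult[OF poly_var Suc.IH] Suc by simp
  have c: "is_poly n (Suc k) (\<lambda>x. cheb (Suc k) (x i))" using Suc poly_cheb by blast
  show ?case using poly_add[OF _ c] a by simp
qed

lemma poly_prod: "m \<le> n \<Longrightarrow> is_poly n (\<Sum>i<m. alpha i) (\<lambda>x. \<Prod>i<m. cheb (alpha i) (x i))"
proof (induction m)
  case 0 then show ?case by (simp add: poly_const)
next
  case (Suc m)
  then have "is_poly n ((\<Sum>i<m. alpha i) + alpha m) (\<lambda>x. (\<Prod>i<m. cheb (alpha i) (x i)) * cheb (alpha m) (x m))"
    using poly_mult poly_cheb by (metis Suc_le_eq Suc_leD)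
  then show ?case by simp
qed

lemma core: "m \<le> n \<Longrightarrow> in_Qbox n (2 * (\<Sum>i<m. alpha i)) (\<lambda>x. 1 - (\<Prod>i<m. cheb (alpha i) (x i))\<^sup>2)"
proof (induction m)
  case 0 then show ?case by (simp add: Q_sos SOS_zero)
next
  case (Suc m)
  define S where "S = (\<Sum>i<m. alpha i)"
  have IH: "in_Qbox n (2 * S) (\<lambda>x. 1 - (\<Prod>i<m. cheb (alpha i) (x i))\<^sup>2)"
    using Suc S_def by simp
  have mn: "m < n" using Suc by simp
  show ?case
  proof (cases "alpha m")
    case 0
    then show ?thesis using IH by (simp add: S_def)
  next
    case (Suc k)
    have pP: "is_poly n S (\<lambda>x. \<Prod>i<m. cheb (alpha i) (x i))" using poly_prod mn S_def by simp
    have pPU: "is_poly n (S + k) (\<lambda>x. (\<Prod>i<m. cheb (alpha i) (x i)) * chebU (alpha m) (x m))"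
      using poly_mult[OF pP poly_chebU[OF mn, of k]] Suc by simp
    have "in_SOS n (2 * (S + alpha m) - 2) (\<lambda>x. ((\<Prod>i<m. cheb (alpha i) (x i)) * chebU (alpha m) (x m))\<^sup>2)"
      by (rule SOS_sq) (use pPU Suc in simp)
    then have A: "in_Qbox n (2 * (S + alpha m)) (\<lambda>x. (1 - (x m)\<^sup>2) * ((\<Prod>i<m. cheb (alpha i) (x i)) * chebU (alpha m) (x m))\<^sup>2)"
      by (rule Q_gen[OF mn])
    have B: "in_Qbox n (2 * (S + alpha m)) (\<lambda>x. 1 - (\<Prod>i<m. cheb (alpha i) (x i))\<^sup>2)"
      using Q_mono[OF IH] by simp
    have eq: "1 - ((\<Prod>i<m. cheb (alpha i) (x i)) * cheb (alpha m) (x m))\<^sup>2 =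
      (1 - (\<Prod>i<m. cheb (alpha i) (x i))\<^sup>2) + (1 - (x m)\<^sup>2) * ((\<Prod>i<m. cheb (alpha i) (x i)) * chebU (alpha m) (x m))\<^sup>2" for x
    proof -
      have "(1 - (x m)\<^sup>2) * ((\<Prod>i<m. cheb (alpha i) (x i)) * chebU (alpha m) (x m))\<^sup>2
        = (\<Prod>i<m. cheb (alpha i) (x i))\<^sup>2 * ((1 - (x m)\<^sup>2) * (chebU (alpha m) (x m))\<^sup>2)"
        by (simp add: power_mult_distrib)
      also have "\<dots> = (\<Prod>i<m. cheb (alpha i) (x i))\<^sup>2 * (1 - (cheb (alpha m) (x m))\<^sup>2)"
        by (simp add: pell)
      finally show ?thesis by (simp add: algebra_simps power_mult_distrib)
    qed
    show ?thesis using Q_add[OF B A] unfolding eq[symmetric] by (simp add: S_def)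
  qed
qed

theorem lemma6:
  fixes n :: nat and alpha :: "nat \<Rightarrow> nat"
  shows "in_Qbox n (2 * tdeg n alpha) (\<lambda>x. 1 - cheb_multi n alpha x) \<and>
         in_Qbox n (2 * tdeg n alpha) (\<lambda>x. 1 + cheb_multi n alpha x)"
proof -
  define T where "T = cheb_multi n alpha"
  define D where "D = tdeg n alpha"
  have pT: "is_poly n D T" using poly_prod[of n n alpha] unfolding T_def D_def cheb_multi_def tdeg_def
    by simp
  have Q1: "in_Qbox n (2 * D) (\<lambda>x. 1 - (T x)\<^sup>2)"
    using core[of n n alpha] unfolding T_def D_def cheb_multi_def tdeg_def by simp
  have Qh: "in_Qbox n (2 * D) (\<lambda>x. 1/2 * (1 - (T x)\<^sup>2))" by (rule Q_scale[OF Q1]) simp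
  have "in_Qbox n (2 * D) (\<lambda>x. (1 - T x)\<^sup>2)"
    by (rule Q_sos, rule SOS_sq) (use poly_diff[OF poly_const pT] in simp)
  then have a: "in_Qbox n (2 * D) (\<lambda>x. 1/2 * (1 - T x)\<^sup>2)" by (rule Q_scale) simp
  have "in_Qbox n (2 * D) (\<lambda>x. (1 + T x)\<^sup>2)"
    by (rule Q_sos, rule SOS_sq) (use poly_add[OF poly_const pT] in simp)
  then have b: "in_Qbox n (2 * D) (\<lambda>x. 1/2 * (1 + T x)\<^sup>2)" by (rule Q_scale) simp
  have e1: "(\<lambda>x. 1 - T x) = (\<lambda>x. 1/2 * (1 - (T x)\<^sup>2) + 1/2 * (1 - T x)\<^sup>2)"
    by (rule ext) (simp add: algebra_simps power2_eq_square)
  have e2: "(\<lambda>x. 1 + T x) = (\<lambda>x. 1/2 * (1 - (T x)\<^sup>2) + 1/2 * (1 + T x)\<^sup>2)"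
    by (rule ext) (simp add: algebra_simps power2_eq_square)
  show ?thesis
    using Q_add[OF Qh a] Q_add[OF Qh b] unfolding T_def[symmetric] D_def[symmetric] e1 e2 by simp
qed

end
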